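(* Let $(S,K,I)$ be a split graph such that $\Phi(S)$ is simple and complete, with $K=\bigcup_{v\in I}N_S(v)$. Put $\omega=|K|$, $\alpha=|I|$, assume $\alpha\ge2$, and let $U$ be the set of universal vertices of $S$. Then: (1) $S$ is homogeneous; (2) if $d$ is the common degree in $S$ of the vertices of $I$, then $1\le d\le \omega-1$; (3) $|U|\in\{d-1,\ d+1-\alpha\}$; (4) $|U|=d-1$ if and only if $\omega=\alpha+d-1$; (5) $|U|=d+1-\alpha$ if and only if $\omega=d+1$; (6) $\omega=\alpha+|U|$ (in particular $\omega\ge\alpha$); (7) $S$ is active if and only if $U=\varnothing$; (8) if $S$ is active, then $\omega=\alpha$ and $d\in\{1,\omega-1\}$; (9) if $\omega=\alpha$ or $d=1$, then $S$ is active.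
   Context: All graphs are finite and simple. A split graph is a graph $S$ whose vertex set is a disjoint union $V(S)=K\,\dot\cup\,I$ with $K$ a clique and $I$ an independent set; $(K,I)$ is called a bipartition of $S$, and $(S,K,I)$ denotes $S$ together with this fixed bipartition. A 2-switch in a graph $G$ is performed on four distinct vertices $a,b,c,d$ with $ab,cd\in E(G)$ and $ac,bd\notin E(G)$: it deletes $ab,cd$ and adds $ac,bd$; $a,b,c,d$ are said to participate in it. A vertex is active in $G$ if it participates in some 2-switch on $G$; $G$ is active if all its vertices are active. A vertex is universal if it is adjacent to all other vertices. For a split graph $(S,K,I)$ and distinct $u,v\in I$, $\sigma_{uv}(S)$ is the number of induced subgraphs of $S$ isomorphic to $P_4$ containing both $u$ and $v$. The factor graph $\Phi(S)$ is the loopless multigraph with vertex set $I$ having exactly $\sigma_{uv}(S)$ parallel edges between $u$ and $v$; it is simple if $\sigma_{uv}(S)\in\{0,1\}$ for all $u,v$. Graph notions (connected, complete, clique, etc.) applied to $\Phi(S)$ refer to its underlying simple graph, in which $u\sim v$ iff $\sigma_{uv}(S)\ge1$. A vertex $w$ of $(S,K,I)$ is swing if $N_S(w)=K\setminus\{w\}$. $(S,K,I)$ is balanced if $|K|=\omega(S)$ and $|I|=\alpha(S)$; it is known that $S$ is balanced iff it has no swing vertex. $(S,K,I)$ is homogeneous if it is balanced and all vertices of $I$ have the same degree in $S$. *)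

theory Defs
  imports Main
begin

definition simple_graph :: "'a set \<Rightarrow> ('a \<Rightarrow> 'a \<Rightarrow> bool) \<Rightarrow> bool" where
  "simple_graph V E \<longleftrightarrow> finite V \<and> (\<forall>x y. E x y \<longrightarrow> x \<in> V \<and> y \<in> V)
     \<and> (\<forall>x y. E x y \<longrightarrow> E y x) \<and> (\<forall>x. \<not> E x x)"

definition nbhd :: "'a set \<Rightarrow> ('a \<Rightarrow> 'a \<Rightarrow> bool) \<Rightarrow> 'a \<Rightarrow> 'a set" where
  "nbhd V E v = {w \<in> V. E v w}"

definition degree :: "'a set \<Rightarrow> ('a \<Rightarrow> 'a \<Rightarrow> bool) \<Rightarrow> 'a \<Rightarrow> nat" where
  "degree V E v = card (nbhd V E v)"

definition is_clique :: "'a set \<Rightarrow> ('a \<Rightarrow> 'a \<Rightarrow> bool) \<Rightarrow> 'a set \<Rightarrow> bool" where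
  "is_clique V E A \<longleftrightarrow> A \<subseteq> V \<and> (\<forall>x\<in>A. \<forall>y\<in>A. x \<noteq> y \<longrightarrow> E x y)"

definition is_indep :: "'a set \<Rightarrow> ('a \<Rightarrow> 'a \<Rightarrow> bool) \<Rightarrow> 'a set \<Rightarrow> bool" where
  "is_indep V E A \<longleftrightarrow> A \<subseteq> V \<and> (\<forall>x\<in>A. \<forall>y\<in>A. \<not> E x y)"

definition clique_number :: "'a set \<Rightarrow> ('a \<Rightarrow> 'a \<Rightarrow> bool) \<Rightarrow> nat" where
  "clique_number V E = Max {card A | A. is_clique V E A}"

definition indep_number :: "'a set \<Rightarrow> ('a \<Rightarrow> 'a \<Rightarrow> bool) \<Rightarrow> nat" where
  "indep_number V E = Max {card A | A. is_indep V E A}"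

definition split_graph :: "'a set \<Rightarrow> ('a \<Rightarrow> 'a \<Rightarrow> bool) \<Rightarrow> 'a set \<Rightarrow> 'a set \<Rightarrow> bool" where
  "split_graph V E K I \<longleftrightarrow> simple_graph V E \<and> V = K \<union> I \<and> K \<inter> I = {}
     \<and> is_clique V E K \<and> is_indep V E I"

definition induced_P4 :: "('a \<Rightarrow> 'a \<Rightarrow> bool) \<Rightarrow> 'a set \<Rightarrow> bool" where
  "induced_P4 E X \<longleftrightarrow> (\<exists>a b c d. distinct [a, b, c, d] \<and> X = {a, b, c, d}
     \<and> E a b \<and> E b c \<and> E c d \<and> \<not> E a c \<and> \<not> E a d \<and> \<not> E b d)"

definition sigma :: "'a set \<Rightarrow> ('a \<Rightarrow> 'a \<Rightarrow> bool) \<Rightarrow> 'a \<Rightarrow> 'a \<Rightarrow> nat" where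
  "sigma V E u v = card {X. X \<subseteq> V \<and> u \<in> X \<and> v \<in> X \<and> induced_P4 E X}"

text \<open>Factor graph \<Phi>(S) on vertex set I: simple, and complete (underlying simple graph).\<close>
definition factor_simple :: "'a set \<Rightarrow> ('a \<Rightarrow> 'a \<Rightarrow> bool) \<Rightarrow> 'a set \<Rightarrow> bool" where
  "factor_simple V E I \<longleftrightarrow> (\<forall>u\<in>I. \<forall>v\<in>I. u \<noteq> v \<longrightarrow> sigma V E u v \<le> 1)"

definition factor_complete :: "'a set \<Rightarrow> ('a \<Rightarrow> 'a \<Rightarrow> bool) \<Rightarrow> 'a set \<Rightarrow> bool" where
  "factor_complete V E I \<longleftrightarrow> (\<forall>u\<in>I. \<forall>v\<in>I. u \<noteq> v \<longrightarrow> sigma V E u v \<ge> 1)"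

definition two_switch :: "'a set \<Rightarrow> ('a \<Rightarrow> 'a \<Rightarrow> bool) \<Rightarrow> 'a \<Rightarrow> 'a \<Rightarrow> 'a \<Rightarrow> 'a \<Rightarrow> bool" where
  "two_switch V E a b c d \<longleftrightarrow> a \<in> V \<and> b \<in> V \<and> c \<in> V \<and> d \<in> V \<and> distinct [a, b, c, d]
     \<and> E a b \<and> E c d \<and> \<not> E a c \<and> \<not> E b d"

definition active_vertex :: "'a set \<Rightarrow> ('a \<Rightarrow> 'a \<Rightarrow> bool) \<Rightarrow> 'a \<Rightarrow> bool" where
  "active_vertex V E x \<longleftrightarrow> (\<exists>a b c d. two_switch V E a b c d \<and> x \<in> {a, b, c, d})"

definition active_graph :: "'a set \<Rightarrow> ('a \<Rightarrow> 'a \<Rightarrow> bool) \<Rightarrow> bool" where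
  "active_graph V E \<longleftrightarrow> (\<forall>x\<in>V. active_vertex V E x)"

definition universal :: "'a set \<Rightarrow> ('a \<Rightarrow> 'a \<Rightarrow> bool) \<Rightarrow> 'a \<Rightarrow> bool" where
  "universal V E x \<longleftrightarrow> x \<in> V \<and> (\<forall>y\<in>V. y \<noteq> x \<longrightarrow> E x y)"

definition balanced :: "'a set \<Rightarrow> ('a \<Rightarrow> 'a \<Rightarrow> bool) \<Rightarrow> 'a set \<Rightarrow> 'a set \<Rightarrow> bool" where
  "balanced V E K I \<longleftrightarrow> card K = clique_number V E \<and> card I = indep_number V E"

definition homogeneous :: "'a set \<Rightarrow> ('a \<Rightarrow> 'a \<Rightarrow> bool) \<Rightarrow> 'a set \<Rightarrow> 'a set \<Rightarrow> bool" where
  "homogeneous V E K I \<longleftrightarrow> balanced V E K I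
     \<and> (\<forall>u\<in>I. \<forall>v\<in>I. degree V E u = degree V E v)"

end

theory Submission
  imports Defs
begin

lemma p4_aux:
  assumes sym: "\<forall>x y. E x y \<longrightarrow> E y x"
    and indep: "\<forall>x\<in>I. \<forall>y\<in>I. \<not> E x y"
    and clq: "\<forall>x\<in>K. \<forall>y\<in>K. x \<noteq> y \<longrightarrow> E x y"
    and KI: "K \<inter> I = {}"
    and V: "{a,b,c,d} \<subseteq> K \<union> I"
    and dist: "distinct [a,b,c,d]"
    and e: "E a b" "E b c" "E c d" "\<not> E a c" "\<not> E a d" "\<not> E b d"
    and uv: "u \<in> I" "v \<in> I" "u \<noteq> v" "u \<in> {a,b,c,d}" "v \<in> {a,b,c,d}"
  shows "\<exists>x. E u x \<and> \<not> E v x \<and> x \<in> K"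
proof -
  have bc: "b \<in> K \<or> c \<in> K" using V indep e by blast
  have ab: "a \<in> K \<or> b \<in> K" using V indep e by blast
  have cd: "c \<in> K \<or> d \<in> K" using V indep e by blast
  have nbd: "\<not> (b \<in> K \<and> d \<in> K)" using clq e dist by auto
  have nac: "\<not> (a \<in> K \<and> c \<in> K)" using clq e dist by auto
  have nad: "\<not> (a \<in> K \<and> d \<in> K)" using clq e dist by auto
  have aI: "a \<in> I" using nac nad cd V by blast
  have dI: "d \<in> I" using nad nbd ab V by blast
  have bK: "b \<in> K" using V aI indep e by blast
  have cK: "c \<in> K" using V dI indep e sym by blast
  have "b \<notin> I" "c \<notin> I" using bK cK KI by blast+
  hence "{u,v} = {a,d}" using uv aI dI by auto
  thus ?thesis using e bK cK sym uv(3) by (metis doubleton_eq_iff)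
qed

lemma fam:
  fixes N :: "'b \<Rightarrow> 'a set" and I :: "'b set"
  assumes fin: "finite I" and two: "card I \<ge> 2"
  and finN: "\<And>v. v\<in>I \<Longrightarrow> finite (N v)"
  and dd: "\<And>v. v\<in>I \<Longrightarrow> card (N v) = d"
  and sd: "\<And>u v. u\<in>I \<Longrightarrow> v\<in>I \<Longrightarrow> u\<noteq>v \<Longrightarrow> card (N u - N v) = 1"
  shows "card (\<Union>(N ` I)) = card I + card {k \<in> \<Union>(N ` I). \<forall>v\<in>I. k \<in> N v}
     \<and> (card {k \<in> \<Union>(N ` I). \<forall>v\<in>I. k \<in> N v} + 1 = d
        \<or> card {k \<in> \<Union>(N ` I). \<forall>v\<in>I. k \<in> N v} + card I = d + 1)"
proof -
  define Cap where "Cap = {k \<in> \<Union>(N ` I). \<forall>v\<in>I. k \<in> N v}"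
  have inter: "card (N a \<inter> N b) + 1 = d" if "a\<in>I" "b\<in>I" "a\<noteq>b" for a b
  proof -
    have "card (N a - N b) = card (N a) - card (N a \<inter> N b)"
      using finN[OF that(1)] by (simp add: card_Diff_subset_Int)
    moreover have "card (N a \<inter> N b) \<le> card (N a)"
      using finN[OF that(1)] by (simp add: card_mono)
    ultimately show ?thesis using sd[OF that] dd[OF that(1)] by linarith
  qed
  have single: "A = {x}" if "card A = 1" "x \<in> A" for A :: "'a set" and x
    using that by (metis card_1_singletonE singletonD)
  obtain u where u: "u \<in> I" using two by fastforce
  have "card (I - {u}) \<ge> 1" using two u fin by simp
  then have "I - {u} \<noteq> {}" by (metis card.empty not_one_le_zero)
  then obtain v where v: "v \<in> I" "v \<noteq> u" by blast
  define C where "C = N u \<inter> N v"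
  have cardC: "card C + 1 = d" using inter[OF u v(1)] v(2) C_def by auto
  have finC: "finite C" using C_def finN[OF u] by simp
  have CapC: "Cap \<subseteq> C" using Cap_def C_def u v by auto
  have disjU: "card (\<Union>z\<in>I. F z) = card I"
    if F1: "\<And>z. z\<in>I \<Longrightarrow> card (F z) = 1"
    and Fd: "\<And>z z'. z\<in>I \<Longrightarrow> z'\<in>I \<Longrightarrow> z\<noteq>z' \<Longrightarrow> F z \<inter> F z' = {}" for F :: "'b \<Rightarrow> 'a set"
  proof -
    have "card (\<Union>z\<in>I. F z) = (\<Sum>z\<in>I. card (F z))"
      apply (rule card_UN_disjoint[OF fin])
      using F1 card_ge_0_finite apply (metis zero_less_one)
      using Fd by blast
    also have "\<dots> = card I" using F1 by simp
    finally show ?thesis .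
  qed
  show ?thesis
  proof (cases "\<forall>w\<in>I. C \<subseteq> N w")
    case True
    have CapEq: "Cap = C" using CapC True Cap_def C_def u by auto
    have F1: "card (N w - C) = 1" if "w \<in> I" for w
      using True that finN[OF that] finC dd[OF that] cardC by (simp add: card_Diff_subset)
    have Fd: "(N w - C) \<inter> (N z - C) = {}" if "w\<in>I" "z\<in>I" "w\<noteq>z" for w z
    proof (rule ccontr)
      assume "(N w - C) \<inter> (N z - C) \<noteq> {}"
      then obtain x where x: "x \<in> N w - C" "x \<in> N z - C" by blast
      have "N w - C = {x}" by (rule single[OF F1[OF that(1)]]) (use x in auto)
      moreover have "N z - C = {x}" by (rule single[OF F1[OF that(2)]]) (use x in auto)
      ultimately have "N w = N z" using True that by blast
      then show False using sd[OF that] by simp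
    qed
    have U: "\<Union>(N ` I) = C \<union> (\<Union>w\<in>I. N w - C)" using True u C_def by auto
    have fU: "finite (\<Union>w\<in>I. N w - C)" using fin finN by auto
    have "card (\<Union>(N ` I)) = card C + card I"
      unfolding U
      apply (subst card_Un_disjoint[OF finC fU])
      using disjU[of "\<lambda>w. N w - C", OF F1 Fd] by auto
    then show ?thesis using CapEq cardC Cap_def by simp
  next
    case False
    then obtain w c where w: "w \<in> I" and c: "c \<in> C" "c \<notin> N w" by blast
    define T where "T = N u \<union> N v"
    have finT: "finite T" using T_def finN u v by simp
    have cardT: "card T = d + 1"
    proof -
      have "T = N u \<union> (N v - N u)" using T_def by auto
      hence "card T = card (N u) + card (N v - N u)"
        using finN[OF u] finN[OF v(1)] by (metis Diff_disjoint Int_commute card_Un_disjoint finite_Diff)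
      thus ?thesis using dd[OF u] sd[OF v(1) u v(2)] by simp
    qed
    have wu: "w \<noteq> u" "w \<noteq> v" using c C_def by auto
    have "N u - N w = {c}" by (rule single[OF sd[OF u w wu(1)[symmetric]]]) (use c C_def in auto)
    moreover have "N v - N w = {c}" by (rule single[OF sd[OF v(1) w wu(2)[symmetric]]]) (use c C_def in auto)
    ultimately have sub: "T - {c} \<subseteq> N w" using T_def by blast
    have cTc: "card (T - {c}) = d" using cardT c C_def T_def finT by simp
    have Nw: "N w = T - {c}"
      using card_subset_eq[OF finN[OF w] sub] cTc dd[OF w] by simp
    have allT: "N z \<subseteq> T" if z: "z \<in> I" for z
    proof (rule ccontr)
      assume "\<not> N z \<subseteq> T"
      then obtain t where t: "t \<in> N z" "t \<notin> T" by blast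
      have zu: "z \<noteq> u" "z \<noteq> v" using t T_def by auto
      have "N z - N u = {t}" by (rule single[OF sd[OF z u zu(1)]]) (use t T_def in auto)
      moreover have "N z - N v = {t}" by (rule single[OF sd[OF z v(1) zu(2)]]) (use t T_def in auto)
      ultimately have s2: "N z - {t} \<subseteq> C" using C_def by blast
      have "card (N z - {t}) = card C" using t finN[OF z] dd[OF z] cardC by simp
      hence "N z - {t} = C" using card_subset_eq[OF finC s2] by simp
      hence "c \<in> N z" using c by blast
      hence "{c, t} \<subseteq> N z - N w" using c t Nw by auto
      moreover have "c \<noteq> t" using c t C_def T_def by auto
      ultimately have "card {c, t} \<le> card (N z - N w)"
        using finN[OF z] by (intro card_mono) auto
      moreover have "z \<noteq> w" using t Nw by auto
      ultimately show False using sd[OF z w] \<open>c \<noteq> t\<close> by simp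
    qed
    have UT: "\<Union>(N ` I) = T" using allT u v T_def by blast
    have F1: "card (T - N z) = 1" if "z \<in> I" for z
      using allT[OF that] finN[OF that] dd[OF that] cardT by (simp add: card_Diff_subset)
    have Fd: "(T - N w') \<inter> (T - N z) = {}" if "w'\<in>I" "z\<in>I" "w'\<noteq>z" for w' z
    proof (rule ccontr)
      assume "(T - N w') \<inter> (T - N z) \<noteq> {}"
      then obtain x where x: "x \<in> T - N w'" "x \<in> T - N z" by blast
      have "T - N w' = {x}" by (rule single[OF F1[OF that(1)]]) (use x in auto)
      moreover have "T - N z = {x}" by (rule single[OF F1[OF that(2)]]) (use x in auto)
      ultimately have "N w' = N z" using allT that by blast
      then show False using sd[OF that] by simp
    qed
    define R where "R = (\<Union>z\<in>I. T - N z)"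
    have cardR: "card R = card I" unfolding R_def by (rule disjU[OF F1 Fd])
    have RT: "R \<subseteq> T" using R_def by auto
    have CapEq: "Cap = T - R" using Cap_def UT R_def by auto
    have "card Cap = card T - card R" using CapEq RT finT by (simp add: card_Diff_subset finite_subset)
    moreover have "card R \<le> card T" using RT finT card_mono by blast
    ultimately show ?thesis using UT cardT cardR Cap_def by simp
  qed
qed

theorem theorem4p3:
  fixes V :: "'a set" and E :: "'a \<Rightarrow> 'a \<Rightarrow> bool" and K I :: "'a set"
  assumes split: "split_graph V E K I"
    and simple: "factor_simple V E I"
    and complete: "factor_complete V E I"
    and cover: "K = (\<Union>v\<in>I. nbhd V E v)"
    and alpha2: "card I \<ge> 2"
  shows "homogeneous V E K I
    \<and> (\<forall>d. (\<forall>v\<in>I. degree V E v = d) \<longrightarrow>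
        (let \<omega> = int (card K); \<alpha> = int (card I);
             u = int (card {x. universal V E x})
         in 1 \<le> int d \<and> int d \<le> \<omega> - 1
          \<and> u \<in> {int d - 1, int d + 1 - \<alpha>}
          \<and> (u = int d - 1 \<longleftrightarrow> \<omega> = \<alpha> + int d - 1)
          \<and> (u = int d + 1 - \<alpha> \<longleftrightarrow> \<omega> = int d + 1)
          \<and> \<omega> = \<alpha> + u
          \<and> (active_graph V E \<longleftrightarrow> {x. universal V E x} = {})
          \<and> (active_graph V E \<longrightarrow> \<omega> = \<alpha> \<and> int d \<in> {1, \<omega> - 1})
          \<and> (\<omega> = \<alpha> \<or> d = 1 \<longrightarrow> active_graph V E)))"
proof -
  let ?N = "nbhd V E"
  have finV: "finite V" and sym: "\<forall>x y. E x y \<longrightarrow> E y x" and irr: "\<forall>x. \<not> E x x"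
    and EV: "\<forall>x y. E x y \<longrightarrow> x \<in> V \<and> y \<in> V"
    and VKI: "V = K \<union> I" and KI: "K \<inter> I = {}"
    and clq: "\<forall>x\<in>K. \<forall>y\<in>K. x \<noteq> y \<longrightarrow> E x y" and ind: "\<forall>x\<in>I. \<forall>y\<in>I. \<not> E x y"
    using split unfolding split_graph_def simple_graph_def is_clique_def is_indep_def by auto
  have finI: "finite I" and finK: "finite K" using finV VKI by auto
  have NK: "?N v \<subseteq> K" if "v \<in> I" for v
    using that ind VKI unfolding nbhd_def by auto
  have finN: "finite (?N v)" if "v \<in> I" for v using NK[OF that] finK finite_subset by blast
  have memN: "x \<in> ?N v \<longleftrightarrow> x \<in> V \<and> E v x" for x v unfolding nbhd_def by simp
  have ex1: "\<exists>x. x \<in> ?N u - ?N v" if u: "u \<in> I" "v \<in> I" "u \<noteq> v" for u v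
  proof -
    have "sigma V E u v \<ge> 1" using complete u unfolding factor_complete_def by blast
    hence "{X. X \<subseteq> V \<and> u \<in> X \<and> v \<in> X \<and> induced_P4 E X} \<noteq> {}"
      unfolding sigma_def by (metis card.empty not_one_le_zero)
    then obtain X where X: "X \<subseteq> V" "u \<in> X" "v \<in> X" "induced_P4 E X" by blast
    then obtain a b c d where abcd: "distinct [a, b, c, d]" "X = {a, b, c, d}"
     "E a b" "E b c" "E c d" "\<not> E a c" "\<not> E a d" "\<not> E b d" unfolding induced_P4_def by blast
    have "\<exists>x. E u x \<and> \<not> E v x \<and> x \<in> K"
      by (rule p4_aux[OF sym ind clq KI _ abcd(1) abcd(3-8) u]) (use X abcd(2) VKI in auto)
    then show ?thesis using memN VKI by blast
  qed
  have sd: "card (?N u - ?N v) = 1" if u: "u \<in> I" "v \<in> I" "u \<noteq> v" for u v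
  proof -
    have fD: "finite (?N u - ?N v)" using finN[OF u(1)] by simp
    have "card (?N u - ?N v) \<le> Suc 0"
    proof (subst card_le_Suc0_iff_eq[OF fD], intro ballI, rule ccontr)
      fix x1 x2 assume x: "x1 \<in> ?N u - ?N v" "x2 \<in> ?N u - ?N v" "x1 \<noteq> x2"
      obtain y where y: "y \<in> ?N v - ?N u" using ex1[OF u(2) u(1) u(3)[symmetric]] by blast
      let ?S = "{X. X \<subseteq> V \<and> u \<in> X \<and> v \<in> X \<and> induced_P4 E X}"
      have finS: "finite ?S" using finV by (simp add: finite_subset[of _ "Pow V"] subset_iff)
      have xK: "x1 \<in> K" "x2 \<in> K" "y \<in> K" using x y NK u by auto
      have mem: "{u, x, y, v} \<in> ?S" if xx: "x \<in> ?N u - ?N v" "x \<in> K" for x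
      proof -
        have "x \<noteq> y" using xx y by auto
        hence "E x y" using clq xx xK by auto
        moreover have "distinct [u, x, y, v]" using xx xK u KI y irr memN by auto
        ultimately have "induced_P4 E {u, x, y, v}"
          unfolding induced_P4_def using xx y ind u memN sym by (intro exI[of _ u] exI[of _ x] exI[of _ y] exI[of _ v]) auto
        thus ?thesis using xx y u VKI memN by auto
      qed
      have ne: "{u, x1, y, v} \<noteq> {u, x2, y, v}"
      proof
        assume "{u, x1, y, v} = {u, x2, y, v}"
        hence "x1 \<in> {u, x2, y, v}" by blast
        thus False using x y xK u KI by auto
      qed
      have "card {{u, x1, y, v}, {u, x2, y, v}} \<le> card ?S"
        using mem[OF x(1) xK(1)] mem[OF x(2) xK(2)] finS by (intro card_mono) auto
      hence "2 \<le> sigma V E u v" using ne unfolding sigma_def by simp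
      moreover have "sigma V E u v \<le> 1" using simple u unfolding factor_simple_def by blast
      ultimately show False by simp
    qed
    moreover have "card (?N u - ?N v) \<noteq> 0" using ex1[OF u] fD by auto
    ultimately show ?thesis by simp
  qed
  have degeq: "card (?N u) = card (?N v)" if u: "u \<in> I" "v \<in> I" for u v
  proof (cases "u = v")
    case False
    have "card (?N u) = card (?N u \<inter> ?N v) + card (?N u - ?N v)" by (rule card_Int_Diff[OF finN[OF u(1)]])
    moreover have "card (?N v) = card (?N v \<inter> ?N u) + card (?N v - ?N u)" by (rule card_Int_Diff[OF finN[OF u(2)]])
    ultimately show ?thesis using sd[OF u False] sd[OF u(2) u(1)] False by (simp add: Int_commute)
  qed simp
  obtain u0 where u0: "u0 \<in> I" using alpha2 by fastforce
  define d0 where "d0 = card (?N u0)"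
  have dd: "card (?N v) = d0" if "v \<in> I" for v using degeq[OF that u0] d0_def by simp
  have other: "\<exists>v\<in>I. v \<noteq> u" for u
  proof -
    have "card (I - {u}) \<ge> 1" using alpha2 finI by (cases "u \<in> I") (auto simp: card_Diff_singleton_if)
    then have "I - {u} \<noteq> {}" by (metis card.empty not_one_le_zero)
    thus ?thesis by blast
  qed
  have dlt: "d0 < card K"
  proof -
    obtain v where v: "v \<in> I" "v \<noteq> u0" using other by blast
    obtain x where "x \<in> ?N v - ?N u0" using ex1[OF v(1) u0 v(2)] by blast
    hence "?N u0 \<subset> K" using NK[OF u0] NK[OF v(1)] by blast
    thus ?thesis using psubset_card_mono[OF finK] d0_def by simp
  qed
  have dge: "1 \<le> d0"
  proof -
    obtain v where v: "v \<in> I" "v \<noteq> u0" using other by blast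
    obtain x where "x \<in> ?N u0 - ?N v" using ex1[OF u0 v(1) v(2)[symmetric]] by blast
    hence "?N u0 \<noteq> {}" by blast
    thus ?thesis using finN[OF u0] d0_def by (simp add: Suc_le_eq card_gt_0_iff)
  qed
  define Cap where "Cap = {k \<in> \<Union>(?N ` I). \<forall>v\<in>I. k \<in> ?N v}"
  have UCap: "{x. universal V E x} = Cap"
  proof (intro set_eqI iffI)
    fix x assume "x \<in> {x. universal V E x}"
    hence x: "x \<in> V" "\<forall>y\<in>V. y \<noteq> x \<longrightarrow> E x y" unfolding universal_def by auto
    have "x \<notin> I"
    proof
      assume xI: "x \<in> I"
      obtain y where "y \<in> I" "y \<noteq> x" using other by blast
      thus False using x ind xI VKI by auto
    qed
    hence "x \<in> K" using x VKI by auto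
    moreover have "\<forall>v\<in>I. x \<in> ?N v"
    proof
      fix v assume v: "v \<in> I"
      hence "v \<noteq> x" "v \<in> V" using KI \<open>x \<in> K\<close> VKI by auto
      hence "E x v" using x by auto
      thus "x \<in> ?N v" using sym memN x by blast
    qed
    ultimately show "x \<in> Cap" using Cap_def cover by auto
  next
    fix x assume "x \<in> Cap"
    hence x: "x \<in> K" "\<forall>v\<in>I. x \<in> ?N v" using Cap_def cover by auto
    show "x \<in> {x. universal V E x}" unfolding universal_def
      using x clq VKI sym memN by auto
  qed
  have famr: "card K = card I + card Cap \<and> (card Cap + 1 = d0 \<or> card Cap + card I = d0 + 1)"
    unfolding Cap_def cover by (rule fam[OF finI alpha2 finN dd sd])
  have clqnum: "clique_number V E = card K"
    unfolding clique_number_def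
  proof (rule Max_eqI)
    show "finite {card A |A. is_clique V E A}"
      by (rule finite_subset[of _ "card ` Pow V"]) (auto simp: is_clique_def finV)
    show "card K \<in> {card A |A. is_clique V E A}"
      using split unfolding split_graph_def by auto
    fix n assume "n \<in> {card A |A. is_clique V E A}"
    then obtain A where A: "n = card A" "is_clique V E A" by blast
    show "n \<le> card K"
    proof (cases "A \<subseteq> K")
      case True thus ?thesis using A finK card_mono by blast
    next
      case False
      then obtain i where i: "i \<in> A" "i \<in> I" using A VKI unfolding is_clique_def by blast
      have "A \<subseteq> insert i (?N i)"
      proof
        fix y assume y: "y \<in> A"
        show "y \<in> insert i (?N i)"
        proof (cases "y = i")
          case False
          hence "E i y" "y \<in> V" using A i y unfolding is_clique_def by auto
          thus ?thesis using memN by blast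
        qed simp
      qed
      hence "card A \<le> card (insert i (?N i))" by (rule card_mono[rotated]) (use finN[OF i(2)] in simp)
      also have "\<dots> \<le> card (?N i) + 1" using finN[OF i(2)] by (simp add: card_insert_if)
      finally show ?thesis using A dd[OF i(2)] dlt by simp
    qed
  qed
  have indnum: "indep_number V E = card I"
    unfolding indep_number_def
  proof (rule Max_eqI)
    show "finite {card A |A. is_indep V E A}"
      by (rule finite_subset[of _ "card ` Pow V"]) (auto simp: is_indep_def finV)
    show "card I \<in> {card A |A. is_indep V E A}"
      using split unfolding split_graph_def by auto
    fix n assume "n \<in> {card A |A. is_indep V E A}"
    then obtain A where A: "n = card A" "is_indep V E A" by blast
    show "n \<le> card I"
    proof (cases "A \<subseteq> I")
      case True thus ?thesis using A finI card_mono by blast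
    next
      case False
      then obtain k where k: "k \<in> A" "k \<in> K" using A VKI unfolding is_indep_def by blast
      then obtain u where u: "u \<in> I" "k \<in> ?N u" using cover by blast
      have "A \<subseteq> insert k (I - {u})"
      proof
        fix y assume y: "y \<in> A"
        show "y \<in> insert k (I - {u})"
        proof (cases "y = k")
          case False
          have "y \<notin> K" using clq k y False A unfolding is_indep_def by blast
          hence "y \<in> I" using y A VKI unfolding is_indep_def by blast
          moreover have "y \<noteq> u" using u y k A memN unfolding is_indep_def by auto
          ultimately show ?thesis by blast
        qed simp
      qed
      hence "card A \<le> card (insert k (I - {u}))" by (rule card_mono[rotated]) (use finI in simp)
      also have "\<dots> \<le> card (I - {u}) + 1" using finI by (simp add: card_insert_if)
      also have "\<dots> = card I" using u finI alpha2 by (simp add: card_Diff_singleton_if)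
      finally show ?thesis using A by simp
    qed
  qed
  have homog: "homogeneous V E K I"
    unfolding homogeneous_def balanced_def degree_def using clqnum indnum dd by simp
  have sw: "two_switch V E u x y v" if u: "u \<in> I" "v \<in> I" "u \<noteq> v"
     and x: "x \<in> ?N u - ?N v" and y: "y \<in> ?N v - ?N u" for u v x y
  proof -
    have "x \<in> K" "y \<in> K" using x y NK u by auto
    thus ?thesis unfolding two_switch_def using u x y VKI KI irr sym memN by auto
  qed
  have act_iff: "active_graph V E \<longleftrightarrow> {x. universal V E x} = {}"
  proof
    assume act: "active_graph V E"
    show "{x. universal V E x} = {}"
    proof (rule ccontr)
      assume "{x. universal V E x} \<noteq> {}"
      then obtain x where x: "universal V E x" by blast
      hence "active_vertex V E x" using act unfolding active_graph_def universal_def by blast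
      then obtain a b c d where "two_switch V E a b c d" "x \<in> {a,b,c,d}"
        unfolding active_vertex_def by blast
      thus False using x sym unfolding two_switch_def universal_def by auto
    qed
  next
    assume U0: "{x. universal V E x} = {}"
    show "active_graph V E" unfolding active_graph_def
    proof
      fix x assume xV: "x \<in> V"
      show "active_vertex V E x"
      proof (cases "x \<in> I")
        case True
        obtain v where v: "v \<in> I" "v \<noteq> x" using other by blast
        obtain x' where x': "x' \<in> ?N x - ?N v" using ex1[OF True v(1) v(2)[symmetric]] by blast
        obtain y where y: "y \<in> ?N v - ?N x" using ex1[OF v(1) True v(2)] by blast
        show ?thesis unfolding active_vertex_def
          using sw[OF True v(1) v(2)[symmetric] x' y] by blast
      next
        case False
        hence xK: "x \<in> K" using xV VKI by auto
        have "x \<notin> Cap" using U0 UCap by blast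
        then obtain v where v: "v \<in> I" "x \<notin> ?N v" using xK cover Cap_def by blast
        obtain u where u: "u \<in> I" "x \<in> ?N u" using xK cover by blast
        have uv: "u \<noteq> v" using u v by blast
        obtain y where y: "y \<in> ?N v - ?N u" using ex1[OF v(1) u(1) uv[symmetric]] by blast
        show ?thesis unfolding active_vertex_def
          using sw[OF u(1) v(1) uv _ y] u v by blast
      qed
    qed
  qed
  have finCap: "finite Cap" by (rule finite_subset[OF _ finK]) (auto simp: Cap_def cover)
  show ?thesis
  proof (intro conjI allI impI homog)
    fix d assume dv: "\<forall>v\<in>I. degree V E v = d"
    hence dd0: "d = d0" using u0 dd degree_def by metis
    have c0: "Cap = {} \<longleftrightarrow> card Cap = 0" using finCap by simp
    show "let \<omega> = int (card K); \<alpha> = int (card I); u = int (card {x. universal V E x})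
         in 1 \<le> int d \<and> int d \<le> \<omega> - 1
          \<and> u \<in> {int d - 1, int d + 1 - \<alpha>}
          \<and> (u = int d - 1 \<longleftrightarrow> \<omega> = \<alpha> + int d - 1)
          \<and> (u = int d + 1 - \<alpha> \<longleftrightarrow> \<omega> = int d + 1)
          \<and> \<omega> = \<alpha> + u
          \<and> (active_graph V E \<longleftrightarrow> {x. universal V E x} = {})
          \<and> (active_graph V E \<longrightarrow> \<omega> = \<alpha> \<and> int d \<in> {1, \<omega> - 1})
          \<and> (\<omega> = \<alpha> \<or> d = 1 \<longrightarrow> active_graph V E)"
      unfolding Let_def act_iff UCap c0 dd0 using famr dlt dge alpha2 by auto
  qed
qed

end
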